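(* Let $G=(V,E)$ be a transitive and finite directed graph which is not a cycle. Let $e_0\in E$ be such that $r(e_0)$ has in-degree $1$. Then: (i) $e_0$ is not a loop; (ii) the edge contraction $G/e_0$ has one fewer vertex of in-degree $1$ than $G$ has; (iii) $G/e_0$ is a finite transitive directed graph which is not a cycle.
   Context: A directed graph $G=(V,E,r,s)$; the in-degree of $v$ is $|r^{-1}(v)|$; a loop is an edge $e$ with $r(e)=s(e)$. $G$ is transitive if there is a path between any two vertices. "$G$ is a cycle" means $G$ is the $n$-cycle graph for some $n\ge1$ (vertices $v_1,\dots,v_n$, exactly one edge from $v_i$ to $v_{i+1}$, indices mod $n$). The edge contraction $G/e$ is obtained by removing the edge $e$ and identifying $s(e)$ and $r(e)$; when $r(e)\ne s(e)$ this is done by removing the vertex $r(e)$ and changing every edge with source (resp. range) $r(e)$ to have source (resp. range) $s(e)$. *)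

theory Defs
  imports Main
begin

text \<open>A directed graph G = (V, E, r, s): vertices V, edges E, range map r, source map s.
  Multiple edges and loops are allowed.\<close>

definition dgraph :: "'v set \<Rightarrow> 'e set \<Rightarrow> ('e \<Rightarrow> 'v) \<Rightarrow> ('e \<Rightarrow> 'v) \<Rightarrow> bool" where
  "dgraph V E r s \<longleftrightarrow> (\<forall>e\<in>E. r e \<in> V \<and> s e \<in> V)"

definition finite_dgraph :: "'v set \<Rightarrow> 'e set \<Rightarrow> ('e \<Rightarrow> 'v) \<Rightarrow> ('e \<Rightarrow> 'v) \<Rightarrow> bool" where
  "finite_dgraph V E r s \<longleftrightarrow> dgraph V E r s \<and> finite V \<and> finite E"

definition in_degree :: "'e set \<Rightarrow> ('e \<Rightarrow> 'v) \<Rightarrow> 'v \<Rightarrow> nat" where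
  "in_degree E r v = card {e \<in> E. r e = v}"

definition is_loop :: "('e \<Rightarrow> 'v) \<Rightarrow> ('e \<Rightarrow> 'v) \<Rightarrow> 'e \<Rightarrow> bool" where
  "is_loop r s e \<longleftrightarrow> r e = s e"

definition edge_rel :: "'e set \<Rightarrow> ('e \<Rightarrow> 'v) \<Rightarrow> ('e \<Rightarrow> 'v) \<Rightarrow> ('v \<times> 'v) set" where
  "edge_rel E r s = {(s e, r e) | e. e \<in> E}"

definition transitive_graph :: "'v set \<Rightarrow> 'e set \<Rightarrow> ('e \<Rightarrow> 'v) \<Rightarrow> ('e \<Rightarrow> 'v) \<Rightarrow> bool" where
  "transitive_graph V E r s \<longleftrightarrow> (\<forall>u\<in>V. \<forall>v\<in>V. (u, v) \<in> (edge_rel E r s)\<^sup>*)"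

definition is_cycle :: "'v set \<Rightarrow> 'e set \<Rightarrow> ('e \<Rightarrow> 'v) \<Rightarrow> ('e \<Rightarrow> 'v) \<Rightarrow> bool" where
  "is_cycle V E r s \<longleftrightarrow>
     (\<exists>n::nat. \<exists>f. n \<ge> 1 \<and> bij_betw f {0..<n} V \<and>
        (\<forall>i<n. \<forall>j<n. card {e \<in> E. s e = f i \<and> r e = f j} =
                        (if j = (i + 1) mod n then 1 else 0)) \<and>
        (\<forall>e\<in>E. s e \<in> V \<and> r e \<in> V) \<and> finite E)"

definition contr_V :: "'v set \<Rightarrow> ('e \<Rightarrow> 'v) \<Rightarrow> ('e \<Rightarrow> 'v) \<Rightarrow> 'e \<Rightarrow> 'v set" where
  "contr_V V r s e0 = (if r e0 = s e0 then V else V - {r e0})"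

definition contr_E :: "'e set \<Rightarrow> 'e \<Rightarrow> 'e set" where
  "contr_E E e0 = E - {e0}"

definition contr_map :: "('e \<Rightarrow> 'v) \<Rightarrow> ('e \<Rightarrow> 'v) \<Rightarrow> 'e \<Rightarrow> ('e \<Rightarrow> 'v) \<Rightarrow> ('e \<Rightarrow> 'v)" where
  "contr_map r s e0 t = (\<lambda>e. if t e = r e0 then s e0 else t e)"

definition contr_r :: "('e \<Rightarrow> 'v) \<Rightarrow> ('e \<Rightarrow> 'v) \<Rightarrow> 'e \<Rightarrow> ('e \<Rightarrow> 'v)" where
  "contr_r r s e0 = contr_map r s e0 r"

definition contr_s :: "('e \<Rightarrow> 'v) \<Rightarrow> ('e \<Rightarrow> 'v) \<Rightarrow> 'e \<Rightarrow> ('e \<Rightarrow> 'v)" where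
  "contr_s r s e0 = contr_map r s e0 s"

end

theory Submission
  imports Defs "HOL-Number_Theory.Cong"
begin
lemma modc: "(j::nat) < n \<Longrightarrow> (j + c) mod n = (i + c) mod n \<Longrightarrow> j = i mod n"
  using cong_add_rcancel_nat[of j c i n] unfolding cong_def by simp

lemma cycle_rot:
  assumes "is_cycle V E r s" "v \<in> V"
  shows "\<exists>(n::nat) f. n \<ge> 1 \<and> bij_betw f {0..<n} V \<and>
     (\<forall>i<n. \<forall>j<n. card {e \<in> E. s e = f i \<and> r e = f j} = (if j = (i + 1) mod n then 1 else 0))
     \<and> f (n-1) = v"
proof -
  obtain n :: nat and f where n: "n \<ge> 1" and bij: "bij_betw f {0..<n} V" and
    C: "\<forall>i<n. \<forall>j<n. card {e \<in> E. s e = f i \<and> r e = f j} = (if j = (i + 1) mod n then 1 else 0)"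
    using assms(1) unfolding is_cycle_def by (elim exE conjE) (rule that; assumption)
  have "v \<in> f ` {0..<n}" using bij assms(2) unfolding bij_betw_def by simp
  then obtain k where k2: "v = f k" and k0: "k \<in> {0..<n}" by blast
  have k: "k < n" "f k = v" using k0 k2 by simp_all
  define \<rho> where "\<rho> = (\<lambda>i. (i + (k + 1)) mod n)"
  have inj: "inj_on \<rho> {0..<n}"
  proof (rule inj_onI)
    fix a b assume ab: "a \<in> {0..<n}" "b \<in> {0..<n}" "\<rho> a = \<rho> b"
    then show "a = b" using modc[of a n "k+1" b] unfolding \<rho>_def by simp
  qed
  have "\<rho> ` {0..<n} \<subseteq> {0..<n}" unfolding \<rho>_def using n by auto
  then have "\<rho> ` {0..<n} = {0..<n}" using endo_inj_surj[OF _ _ inj] by auto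
  with inj have rb: "bij_betw \<rho> {0..<n} {0..<n}" unfolding bij_betw_def by auto
  define g where "g = f \<circ> \<rho>"
  have gb: "bij_betw g {0..<n} V" unfolding g_def using bij_betw_trans[OF rb bij] .
  have rr: "(\<rho> i + 1) mod n = ((i + 1) + (k + 1)) mod n" for i
    unfolding \<rho>_def using mod_add_left_eq[of "i + (k+1)" n 1] by (simp add: ac_simps)
  have key: "(\<rho> j = (\<rho> i + 1) mod n) \<longleftrightarrow> j = (i + 1) mod n" if "i < n" "j < n" for i j
  proof
    assume "\<rho> j = (\<rho> i + 1) mod n"
    then have "(j + (k+1)) mod n = ((i + 1) + (k+1)) mod n" unfolding rr unfolding \<rho>_def .
    then show "j = (i + 1) mod n" using modc that by blast
  next
    assume "j = (i + 1) mod n"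
    then show "\<rho> j = (\<rho> i + 1) mod n" unfolding rr unfolding \<rho>_def
      using mod_add_left_eq[of "i + 1" n "k+1"] by simp
  qed
  have C2: "\<forall>i<n. \<forall>j<n. card {e \<in> E. s e = g i \<and> r e = g j} = (if j = (i + 1) mod n then 1 else 0)"
  proof (intro allI impI)
    fix i j assume ij: "i < n" "j < n"
    have "\<rho> i < n" "\<rho> j < n" unfolding \<rho>_def using n by auto
    then show "card {e \<in> E. s e = g i \<and> r e = g j} = (if j = (i + 1) mod n then 1 else 0)"
      using C key[OF ij] unfolding g_def by auto
  qed
  have "g (n-1) = v" unfolding g_def \<rho>_def using n k
    by (simp add: Suc_diff_le)
  then show ?thesis using n gb C2 by blast
qed

lemma cycle_out_unique:
  assumes "is_cycle V E r s" "e \<in> E" "e' \<in> E" "s e = s e'"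
  shows "e = e'"
proof -
  obtain n :: nat and f where n: "n \<ge> 1" and bij: "bij_betw f {0..<n} V" and
    C: "\<forall>i<n. \<forall>j<n. card {e \<in> E. s e = f i \<and> r e = f j} = (if j = (i + 1) mod n then 1 else 0)"
    and V: "\<forall>e\<in>E. s e \<in> V \<and> r e \<in> V" and fin: "finite E"
    using assms(1) unfolding is_cycle_def by (elim exE conjE) (rule that; assumption)
  obtain i where i: "i < n" "f i = s e" using bij V assms(2) unfolding bij_betw_def by fastforce
  obtain j where j: "j < n" "f j = r e" using bij V assms(2) unfolding bij_betw_def by fastforce
  obtain j' where j': "j' < n" "f j' = r e'" using bij V assms(3) unfolding bij_betw_def by fastforce
  define A where "A = {x \<in> E. s x = f i \<and> r x = f j}"
  have "e \<in> A" using assms i j unfolding A_def by auto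
  then have "card A \<noteq> 0" using fin unfolding A_def by auto
  moreover have cA: "card A = (if j = (i+1) mod n then 1 else 0)" using C i j unfolding A_def by blast
  ultimately have jj: "j = (i+1) mod n" by (metis)
  have "card {x \<in> E. s x = f i \<and> r x = f j'} \<noteq> 0" using fin assms i j' by auto
  moreover have "card {x \<in> E. s x = f i \<and> r x = f j'} = (if j' = (i+1) mod n then 1 else 0)" using C i j' by blast
  ultimately have "j' = (i+1) mod n" by metis
  with jj have "e' \<in> A" using assms i j j' unfolding A_def by auto
  moreover have "card A = 1" using cA jj by simp
  ultimately obtain x where "A = {x}" "e' \<in> A" by (metis card_1_singletonE)
  with \<open>e \<in> A\<close> have "e = x" "e' = x" by simp_all
  then show ?thesis by simp
qed
lemma path_to_w:
  assumes "(a, b) \<in> (edge_rel E r s)\<^sup>*" "b = w"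
    and "\<And>e. e \<in> E \<Longrightarrow> r e = w \<Longrightarrow> s e = w"
  shows "a = w"
  using assms(1,2)
proof (induction rule: converse_rtrancl_induct)
  case base then show ?case by simp
next
  case (step y z)
  then show ?case using assms(3) unfolding edge_rel_def by auto
qed

lemma path_map:
  assumes "(a, b) \<in> (edge_rel E r s)\<^sup>*" "e0 \<in> E"
  shows "((if a = r e0 then s e0 else a), (if b = r e0 then s e0 else b))
     \<in> (edge_rel (contr_E E e0) (contr_r r s e0) (contr_s r s e0))\<^sup>*"
  using assms(1)
proof (induction rule: rtrancl_induct)
  case base then show ?case by simp
next
  case (step y z)
  then obtain e where e: "e \<in> E" "s e = y" "r e = z" unfolding edge_rel_def by auto
  show ?case
  proof (cases "e = e0")
    case True
    then show ?thesis using step e by auto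
  next
    case False
    then have "((if y = r e0 then s e0 else y), (if z = r e0 then s e0 else z))
      \<in> edge_rel (contr_E E e0) (contr_r r s e0) (contr_s r s e0)"
      unfolding edge_rel_def contr_E_def contr_r_def contr_s_def contr_map_def using e
      by blast
    then show ?thesis using step.IH by (meson rtrancl_into_rtrancl)
  qed
qed

theorem lemma3p3:
  fixes V :: "'v set" and E :: "'e set" and r s :: "'e \<Rightarrow> 'v" and e0 :: 'e
  assumes "finite_dgraph V E r s"
    and "transitive_graph V E r s"
    and "\<not> is_cycle V E r s"
    and "e0 \<in> E"
    and "in_degree E r (r e0) = 1"
  shows "\<not> is_loop r s e0
    \<and> card {v \<in> contr_V V r s e0. in_degree (contr_E E e0) (contr_r r s e0) v = 1} + 1
           = card {v \<in> V. in_degree E r v = 1}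
    \<and> finite_dgraph (contr_V V r s e0) (contr_E E e0) (contr_r r s e0) (contr_s r s e0)
         \<and> transitive_graph (contr_V V r s e0) (contr_E E e0) (contr_r r s e0) (contr_s r s e0)
         \<and> \<not> is_cycle (contr_V V r s e0) (contr_E E e0) (contr_r r s e0) (contr_s r s e0)"
proof -
  define w where "w = r e0"
  define u where "u = s e0"
  have finV: "finite V" and finE: "finite E" and dg: "\<forall>e\<in>E. r e \<in> V \<and> s e \<in> V"
    using assms(1) unfolding finite_dgraph_def dgraph_def by auto
  have e0: "e0 \<in> E" by (rule assms(4))
  have wV: "w \<in> V" and uV: "u \<in> V" using dg e0 unfolding w_def u_def by auto
  have only: "e = e0" if "e \<in> E" "r e = w" for e
  proof -
    have "card {e \<in> E. r e = w} = 1" using assms(5) unfolding in_degree_def w_def .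
    then obtain x where "{e \<in> E. r e = w} = {x}" by (rule card_1_singletonE)
    moreover have "e \<in> {e \<in> E. r e = w}" "e0 \<in> {e \<in> E. r e = w}" using that e0 w_def by auto
    ultimately have "e = x" "e0 = x" by simp_all
    then show ?thesis by simp
  qed
  have only': "r e \<noteq> w" if "e \<in> E" "e \<noteq> e0" for e using only that by blast
  have trans: "(a, b) \<in> (edge_rel E r s)\<^sup>*" if "a \<in> V" "b \<in> V" for a b
    using assms(2) that unfolding transitive_graph_def by simp
  have uw: "u \<noteq> w"
  proof
    assume uw: "u = w"
    have Vw: "V = {w}"
    proof -
      have sw: "\<And>e. e \<in> E \<Longrightarrow> r e = w \<Longrightarrow> s e = w" using only' uw u_def by (metis)
      have "v = w" if "v \<in> V" for v
        using path_to_w[OF trans[OF that wV] refl sw] .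
      then show ?thesis using wV by blast
    qed
    have Ee: "E = {e0}"
    proof -
      have "e = e0" if "e \<in> E" for e
      proof -
        have "r e = w" using dg Vw that by auto
        then show ?thesis using only that by blast
      qed
      then show ?thesis using e0 by blast
    qed
    have "is_cycle V E r s"
      unfolding is_cycle_def
    proof (intro exI conjI)
      show "(1::nat) \<ge> 1" by simp
      show "bij_betw (\<lambda>_. w) {0..<(1::nat)} V" using Vw by (auto simp: bij_betw_def inj_on_def)
      show "\<forall>i<(1::nat). \<forall>j<(1::nat). card {e \<in> E. s e = w \<and> r e = w} = (if j = (i + 1) mod 1 then 1 else 0)"
      proof -
        have "s e0 = w" "r e0 = w" using uw unfolding u_def w_def by simp_all
        then have "{e \<in> E. s e = w \<and> r e = w} = {e0}" using Ee by auto
        then show ?thesis by simp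
      qed
      show "\<forall>e\<in>E. s e \<in> V \<and> r e \<in> V" using dg by blast
      show "finite E" by (rule finE)
    qed
    then show False using assms(3) by blast
  qed
  have nl: "\<not> is_loop r s e0" using uw unfolding is_loop_def u_def w_def by simp
  define V' where "V' = contr_V V r s e0"
  define E' where "E' = contr_E E e0"
  define r' where "r' = contr_r r s e0"
  define s' where "s' = contr_s r s e0"
  have V'_eq: "V' = V - {w}" using uw unfolding V'_def contr_V_def u_def w_def by auto
  have E'_eq: "E' = E - {e0}" unfolding E'_def contr_E_def by simp
  have r'_eq: "r' e = r e" if "e \<in> E'" for e
    using only' that unfolding r'_def contr_r_def contr_map_def E'_eq w_def by auto
  have s'_eq: "s' e = (if s e = w then u else s e)" for e
    unfolding s'_def contr_s_def contr_map_def w_def u_def by simp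
  have rE': "r e \<noteq> w" if "e \<in> E'" for e using only that E'_eq by blast
  have indeg: "in_degree E' r' v = in_degree E r v" if "v \<in> V" "v \<noteq> w" for v
  proof -
    have "{e \<in> E'. r' e = v} = {e \<in> E. r e = v}"
    proof (intro set_eqI iffI)
      fix e assume "e \<in> {e \<in> E'. r' e = v}"
      then show "e \<in> {e \<in> E. r e = v}" using r'_eq E'_eq by auto
    next
      fix e assume h: "e \<in> {e \<in> E. r e = v}"
      then have "e \<noteq> e0" using that unfolding w_def by auto
      then show "e \<in> {e \<in> E'. r' e = v}" using h r'_eq E'_eq by auto
    qed
    then show ?thesis unfolding in_degree_def by simp
  qed
  have setq: "{v \<in> V'. in_degree E' r' v = 1} = {v \<in> V. in_degree E r v = 1} - {w}"
  proof (intro set_eqI iffI)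
    fix v assume "v \<in> {v \<in> V'. in_degree E' r' v = 1}"
    then have "v \<in> V" "v \<noteq> w" "in_degree E' r' v = 1" using V'_eq by auto
    then show "v \<in> {v \<in> V. in_degree E r v = 1} - {w}" using indeg by simp
  next
    fix v assume "v \<in> {v \<in> V. in_degree E r v = 1} - {w}"
    then have "v \<in> V" "v \<noteq> w" "in_degree E r v = 1" by auto
    then show "v \<in> {v \<in> V'. in_degree E' r' v = 1}" using indeg V'_eq by simp
  qed
  have wA: "w \<in> {v \<in> V. in_degree E r v = 1}" using wV assms(5) w_def by simp
  have finA: "finite {v \<in> V. in_degree E r v = 1}" using finV by simp
  have "card {v \<in> V. in_degree E r v = 1} > 0" using wA finA card_gt_0_iff by blast
  moreover have "card ({v \<in> V. in_degree E r v = 1} - {w}) = card {v \<in> V. in_degree E r v = 1} - 1"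
    using card_Diff_singleton[OF wA] .
  ultimately have part2: "card {v \<in> V'. in_degree E' r' v = 1} + 1 = card {v \<in> V. in_degree E r v = 1}"
    unfolding setq by linarith
  have fd: "finite_dgraph V' E' r' s'"
    unfolding finite_dgraph_def dgraph_def
  proof (intro conjI ballI)
    fix e assume e: "e \<in> E'"
    show "r' e \<in> V'" using e r'_eq rE' dg E'_eq V'_eq by auto
    show "s' e \<in> V'" using e s'_eq dg E'_eq V'_eq uV uw by auto
  next
    show "finite V'" using finV V'_eq by simp
    show "finite E'" using finE E'_eq by simp
  qed
  have tr: "transitive_graph V' E' r' s'"
    unfolding transitive_graph_def
  proof (intro ballI)
    fix a b assume ab: "a \<in> V'" "b \<in> V'"
    have "((if a = r e0 then s e0 else a), (if b = r e0 then s e0 else b))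
       \<in> (edge_rel (contr_E E e0) (contr_r r s e0) (contr_s r s e0))\<^sup>*"
      using path_map[OF trans e0] ab V'_eq by auto
    then show "(a, b) \<in> (edge_rel E' r' s')\<^sup>*"
      using ab V'_eq unfolding E'_def r'_def s'_def w_def by auto
  qed
  have nc: "\<not> is_cycle V' E' r' s'"
  proof
    assume cyc: "is_cycle V' E' r' s'"
    have uV': "u \<in> V'" using uV uw V'_eq by simp
    obtain n :: nat and f where n: "n \<ge> 1" and bij: "bij_betw f {0..<n} V'" and
      C: "\<forall>i<n. \<forall>j<n. card {e \<in> E'. s' e = f i \<and> r' e = f j} = (if j = (i + 1) mod n then 1 else 0)"
      and fu: "f (n-1) = u"
      using cycle_rot[OF cyc uV'] by (elim exE conjE) (rule that; assumption)
    obtain e2 where e2: "e2 \<in> E" "s e2 = w"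
    proof -
      have "(w, u) \<in> (edge_rel E r s)\<^sup>*" using trans wV uV by blast
      then obtain y where "(w, y) \<in> edge_rel E r s" using uw
        by (metis converse_rtranclE)
      then show ?thesis using that unfolding edge_rel_def by auto
    qed
    have e2E': "e2 \<in> E'" using e2 E'_eq uw u_def by auto
    have uout: "e = e0" if "e \<in> E" "s e = u" for e
    proof (rule ccontr)
      assume "e \<noteq> e0"
      then have "e \<in> E'" using that E'_eq by simp
      moreover have "s' e = s' e2" using s'_eq that e2 uw by simp
      ultimately have "e = e2" using cycle_out_unique[OF cyc _ e2E'] by blast
      then show False using that e2 uw by simp
    qed
    have bijf: "inj_on f {0..<n}" "f ` {0..<n} = V'" using bij unfolding bij_betw_def by auto
    have fV: "f i \<in> V" "f i \<noteq> w" if "i < n" for i using bijf that V'_eq by auto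
    define g where "g = f(n := w)"
    have "is_cycle V E r s"
      unfolding is_cycle_def
    proof (intro exI conjI)
      show "Suc n \<ge> 1" by simp
      show "bij_betw g {0..<Suc n} V"
      proof -
        have b1: "bij_betw g {0..<n} V'"
          using bij by (rule bij_betw_cong[THEN iffD1, rotated]) (simp add: g_def)
        have b2: "bij_betw g {n} {w}" by (simp add: g_def)
        have "bij_betw g ({0..<n} \<union> {n}) (V' \<union> {w})"
          using bij_betw_combine[OF b1 b2] V'_eq by auto
        moreover have "{0..<n} \<union> {n} = {0..<Suc n}" by auto
        moreover have "V' \<union> {w} = V" using V'_eq wV by auto
        ultimately show ?thesis by simp
      qed
      show "\<forall>e\<in>E. s e \<in> V \<and> r e \<in> V" using dg by blast
      show "finite E" by (rule finE)
      show "\<forall>i<Suc n. \<forall>j<Suc n. card {e \<in> E. s e = g i \<and> r e = g j} =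
          (if j = (i + 1) mod Suc n then 1 else 0)"
      proof (intro allI impI)
        fix i j assume i: "i < Suc n" and j: "j < Suc n"
        show "card {e \<in> E. s e = g i \<and> r e = g j} = (if j = (i + 1) mod Suc n then 1 else 0)"
        proof (cases "i < n")
          case iT: True
          show ?thesis
          proof (cases "j < n")
            case jT: True
            show ?thesis
            proof (cases "i = n - 1")
              case True
              have "{e \<in> E. s e = g i \<and> r e = g j} = {}"
                using uout fV[OF jT] True fu iT jT unfolding g_def w_def by auto
              moreover have "j \<noteq> (i + 1) mod Suc n" using True n jT by simp
              ultimately show ?thesis by (simp only: card.empty if_False)
            next
              case False
              have fiu: "f i \<noteq> u"
              proof
                assume "f i = u"
                then have "i = n - 1" using inj_onD[OF bijf(1), of i "n-1"] fu iT n by simp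
                with False show False by simp
              qed
              have "{e \<in> E. s e = g i \<and> r e = g j} = {e \<in> E'. s' e = f i \<and> r' e = f j}"
              proof (intro set_eqI iffI)
                fix e assume e: "e \<in> {e \<in> E. s e = g i \<and> r e = g j}"
                then have "e \<noteq> e0" using fV[OF jT] iT jT unfolding g_def w_def by auto
                then show "e \<in> {e \<in> E'. s' e = f i \<and> r' e = f j}"
                  using e r'_eq s'_eq fV[OF iT] iT jT E'_eq unfolding g_def by auto
              next
                fix e assume e: "e \<in> {e \<in> E'. s' e = f i \<and> r' e = f j}"
                then have "s e \<noteq> w" using s'_eq fiu by auto
                then show "e \<in> {e \<in> E. s e = g i \<and> r e = g j}"
                  using e r'_eq s'_eq iT jT E'_eq unfolding g_def by auto
              qed
              moreover have "(i + 1) mod Suc n = (i + 1) mod n"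
                using False iT by simp
              ultimately show ?thesis using C iT jT by simp
            qed
          next
            case jF: False
            then have jn: "j = n" using j by simp
            have "{e \<in> E. s e = g i \<and> r e = g j} = (if i = n - 1 then {e0} else {})"
            proof -
              have iff: "(f i = u) = (i = n - 1)"
              proof
                assume "f i = u"
                then show "i = n - 1" using inj_onD[OF bijf(1), of i "n-1"] fu iT n by simp
              next
                assume "i = n - 1"
                then show "f i = u" using fu by simp
              qed
              have sub: "{e \<in> E. s e = f i \<and> r e = w} \<subseteq> {e0}" using only by blast
              have "{e \<in> E. s e = g i \<and> r e = g j} = {e \<in> E. s e = f i \<and> r e = w}"
                using jn iT unfolding g_def by auto
              also have "\<dots> = (if f i = u then {e0} else {})"
              proof (cases "f i = u")
                case True
                then show ?thesis using sub e0 unfolding u_def w_def by auto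
              next
                case False
                then show ?thesis using sub unfolding u_def by auto
              qed
              finally show ?thesis using iff by simp
            qed
            moreover have "(j = (i + 1) mod Suc n) = (i = n - 1)"
            proof -
              have mi: "(i + 1) mod Suc n = i + 1" using iT by simp
              show ?thesis using jn n iT by (simp only: mi) arith
            qed
            ultimately show ?thesis by simp
          qed
        next
          case iF: False
          then have iN: "i = n" using i by simp
          show ?thesis
          proof (cases "j < n")
            case jT: True
            have S: "{e \<in> E. s e = g i \<and> r e = g j} = {e \<in> E'. s' e = f (n-1) \<and> r' e = f j}"
            proof (intro set_eqI iffI)
              fix e assume e: "e \<in> {e \<in> E. s e = g i \<and> r e = g j}"
              then have "e \<noteq> e0" using iN uw u_def unfolding g_def by auto
              then show "e \<in> {e \<in> E'. s' e = f (n-1) \<and> r' e = f j}"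
                using e r'_eq s'_eq fu iN jT E'_eq unfolding g_def by auto
            next
              fix e assume e: "e \<in> {e \<in> E'. s' e = f (n-1) \<and> r' e = f j}"
              then have "e \<in> E" "e \<noteq> e0" using E'_eq by auto
              then have "s e \<noteq> u" using uout by blast
              then have "s e = w" using e s'_eq fu by (auto split: if_splits)
              then show "e \<in> {e \<in> E. s e = g i \<and> r e = g j}"
                using e r'_eq iN jT E'_eq unfolding g_def by auto
            qed
            have cc: "card {e \<in> E'. s' e = f (n-1) \<and> r' e = f j} = (if j = 0 then 1 else 0)"
            proof -
              have "n - 1 < n" using n by simp
              then have "card {e \<in> E'. s' e = f (n-1) \<and> r' e = f j} = (if j = (n - 1 + 1) mod n then 1 else 0)"
                using C jT by blast
              moreover have "(n - 1 + 1) mod n = 0" using n by simp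
              ultimately show ?thesis by simp
            qed
            have "(i + 1) mod Suc n = 0" using iN by simp
            then show ?thesis using S cc by simp
          next
            case jF: False
            then have jn: "j = n" using j by simp
            have "{e \<in> E. s e = g i \<and> r e = g j} = {}"
            proof (rule equals0I)
              fix e assume "e \<in> {e \<in> E. s e = g i \<and> r e = g j}"
              then have "e \<in> E" "r e = w" "s e = w" using iN jn unfolding g_def by auto
              then have "e = e0" using only by blast
              then show False using \<open>s e = w\<close> uw u_def by simp
            qed
            moreover have "j \<noteq> (i + 1) mod Suc n" using jn iN n by simp
            ultimately show ?thesis by (simp only: card.empty if_False)
          qed
        qed
      qed
    qed
    then show False using assms(3) by blast
  qed
  show ?thesis using nl part2 fd tr nc unfolding V'_def E'_def r'_def s'_def by blast
qed

end
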